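(* Let $\alpha,\beta,\gamma\in\Bbbk^n$ and $\mathcal H=\mathcal H(\alpha,\beta,\gamma)$. A $\Bbbk$-basis of $\mathcal H$ is given by the (images of the) paths \[(u_iu_{i+1}\cdots u_{i+k-1})\,(d_{i+k-1}u_{i+k-1})^j\,(d_{i+k-1}d_{i+k-2}\cdots d_{i+k-\ell}),\qquad i\in Q_0,\ j,k,\ell\ge 0,\] where the block of $u$'s is empty if $k=0$, the block of $d$'s is empty if $\ell=0$, and for $j=k=\ell=0$ the path is the trivial path $e_i$ (indices mod $n$; in particular $k,\ell$ may exceed $n$, so arrows repeat).
   Context: $\Bbbk$ is an algebraically closed field of characteristic zero. Fix $n\ge1$; indices are taken modulo $n$ and $Q_0=\{0,\dots,n-1\}$. Let $Q$ be the quiver with vertex set $Q_0$ and arrows $u_i:i\to i+1$ and $d_i:i+1\to i$ for each $i\in Q_0$ (for $n=1$ these are two loops). Paths are written left to right: in a path $a_1a_2\cdots a_m$ the target of $a_j$ is the source of $a_{j+1}$; multiplication in the path algebra $\Bbbk Q$ is concatenation (zero if the paths do not compose), and $e_i$ is the trivial path at $i$, so $e_iu_i=u_i=u_ie_{i+1}$ and $e_{i+1}d_i=d_i=d_ie_i$. For $\alpha,\beta,\gamma\in\Bbbk^n$ the quiver down-up algebra $\mathcal H(\alpha,\beta,\gamma)$ is $\Bbbk Q$ modulo the relations $d_{i-1}u_{i-1}u_i=\alpha_iu_id_iu_i+\beta_iu_iu_{i+1}d_{i+1}+\gamma_iu_i$ and $d_id_{i-1}u_{i-1}=\alpha_id_iu_id_i+\beta_iu_{i+1}d_{i+1}d_i+\gamma_id_i$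 for all $i\in Q_0$. *)

theory Defs
  imports Main "HOL-Computational_Algebra.Polynomial"
begin

text \<open>Arrows of the cyclic double quiver with vertices 0..n-1:
  U i is u_i : i -> i+1, D i is d_i : i+1 -> i (indices mod n).\<close>
datatype arr = U nat | D nat

definition idx :: "nat \<Rightarrow> int \<Rightarrow> nat" where
  "idx n z = nat (z mod int n)"

fun arr_src :: "nat \<Rightarrow> arr \<Rightarrow> nat" where
  "arr_src n (U i) = i"
| "arr_src n (D i) = (i + 1) mod n"

fun arr_tgt :: "nat \<Rightarrow> arr \<Rightarrow> nat" where
  "arr_tgt n (U i) = (i + 1) mod n"
| "arr_tgt n (D i) = i"

fun arr_idx :: "arr \<Rightarrow> nat" where
  "arr_idx (U i) = i"
| "arr_idx (D i) = i"

text \<open>A path is a pair (v, as): start vertex v and arrows a_1...a_m written left to right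
  (target of a_j = source of a_(j+1)); (v, []) is the trivial path e_v.\<close>
type_synonym path = "nat \<times> arr list"

fun valid_arrs :: "nat \<Rightarrow> nat \<Rightarrow> arr list \<Rightarrow> bool" where
  "valid_arrs n v [] = (v < n)"
| "valid_arrs n v (a # as) =
     (v < n \<and> arr_idx a < n \<and> arr_src n a = v \<and> valid_arrs n (arr_tgt n a) as)"

definition valid_path :: "nat \<Rightarrow> path \<Rightarrow> bool" where
  "valid_path n p = valid_arrs n (fst p) (snd p)"

fun end_vertex :: "nat \<Rightarrow> nat \<Rightarrow> arr list \<Rightarrow> nat" where
  "end_vertex n v [] = v"
| "end_vertex n v (a # as) = end_vertex n (arr_tgt n a) as"

definition path_tgt :: "nat \<Rightarrow> path \<Rightarrow> nat" where
  "path_tgt n p = end_vertex n (fst p) (snd p)"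

text \<open>Elements of the path algebra kQ are represented as finitely supported functions
  path => k (coefficient of each path); basis vector of a path:\<close>
definition pvec :: "path \<Rightarrow> path \<Rightarrow> 'k::field" where
  "pvec p = (\<lambda>x. if x = p then 1 else 0)"

text \<open>Relations of H(alpha,beta,gamma) at vertex i, as (start vertex, end vertex,
  list of (coefficient, arrow word)).\<close>
definition relU :: "nat \<Rightarrow> (nat \<Rightarrow> 'k::field) \<Rightarrow> (nat \<Rightarrow> 'k) \<Rightarrow> (nat \<Rightarrow> 'k) \<Rightarrow> nat
    \<Rightarrow> nat \<times> nat \<times> ('k \<times> arr list) list" where
  "relU n \<alpha> \<beta> \<gamma> i =
    (let im = idx n (int i - 1); ip = idx n (int i + 1) in
     (i, ip,
      [(1, [D im, U im, U i]),
       (- \<alpha> i, [U i, D i, U i]),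
       (- \<beta> i, [U i, U ip, D ip]),
       (- \<gamma> i, [U i])]))"

definition relD :: "nat \<Rightarrow> (nat \<Rightarrow> 'k::field) \<Rightarrow> (nat \<Rightarrow> 'k) \<Rightarrow> (nat \<Rightarrow> 'k) \<Rightarrow> nat
    \<Rightarrow> nat \<times> nat \<times> ('k \<times> arr list) list" where
  "relD n \<alpha> \<beta> \<gamma> i =
    (let im = idx n (int i - 1); ip = idx n (int i + 1) in
     (ip, i,
      [(1, [D i, D im, U im]),
       (- \<alpha> i, [D i, U i, D i]),
       (- \<beta> i, [U ip, D ip, D i]),
       (- \<gamma> i, [D i])]))"

text \<open>The element p * r * q of kQ, for paths p = (a, ps), q (arrow list qs) and a relation
  r given by its list of terms, assuming the product is composable.\<close>
definition sandwich :: "path \<Rightarrow> ('k::field \<times> arr list) list \<Rightarrow> arr list \<Rightarrow> path \<Rightarrow> 'k" where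
  "sandwich p ts qs = (\<lambda>x. sum_list (map (\<lambda>(c, as). if x = (fst p, snd p @ as @ qs) then c else 0) ts))"

text \<open>The two-sided ideal of kQ generated by the relations: the k-span of all
  (nonzero, i.e. composable) products p * r * q with p, q paths and r a relation.\<close>
inductive_set hideal :: "nat \<Rightarrow> (nat \<Rightarrow> 'k::field) \<Rightarrow> (nat \<Rightarrow> 'k) \<Rightarrow> (nat \<Rightarrow> 'k)
    \<Rightarrow> (path \<Rightarrow> 'k) set"
  for n \<alpha> \<beta> \<gamma> where
  zero: "(\<lambda>_. 0) \<in> hideal n \<alpha> \<beta> \<gamma>"
| add: "f \<in> hideal n \<alpha> \<beta> \<gamma> \<Longrightarrow> g \<in> hideal n \<alpha> \<beta> \<gamma> \<Longrightarrow> (\<lambda>x. f x + g x) \<in> hideal n \<alpha> \<beta> \<gamma>"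
| smult: "f \<in> hideal n \<alpha> \<beta> \<gamma> \<Longrightarrow> (\<lambda>x. c * f x) \<in> hideal n \<alpha> \<beta> \<gamma>"
| gen: "\<lbrakk> i < n; r = relU n \<alpha> \<beta> \<gamma> i \<or> r = relD n \<alpha> \<beta> \<gamma> i;
          valid_path n p; path_tgt n p = fst r;
          valid_arrs n (fst (snd r)) qs \<rbrakk>
        \<Longrightarrow> sandwich p (snd (snd r)) qs \<in> hideal n \<alpha> \<beta> \<gamma>"

definition bpath :: "nat \<Rightarrow> nat \<Rightarrow> nat \<Rightarrow> nat \<Rightarrow> nat \<Rightarrow> path" where
  "bpath n i j k l =
    (i, map (\<lambda>m. U (idx n (int i + int m))) [0..<k]
        @ concat (replicate j [D (idx n (int i + int k - 1)), U (idx n (int i + int k - 1))])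
        @ map (\<lambda>m. D (idx n (int i + int k - 1 - int m))) [0..<l])"

end

theory Submission
  imports Defs
begin


locale qd =
  fixes n :: nat and \<alpha> \<beta> \<gamma> :: "nat \<Rightarrow> 'k::field"
  assumes n1: "1 \<le> n"
begin

definition im :: "nat \<Rightarrow> nat" where "im i = idx n (int i - 1)"
definition ip :: "nat \<Rightarrow> nat" where "ip i = idx n (int i + 1)"

lemma idx_lt[simp]: "idx n z < n"
  using n1 unfolding idx_def by (simp add: nat_less_iff)

lemma int_idx: "int (idx n z) = z mod int n"
  using n1 unfolding idx_def by simp

lemma idx_idx: "idx n (int (idx n a) + t) = idx n (a + t)"
  unfolding idx_def int_idx[unfolded idx_def] by (simp add: mod_add_left_eq)

lemma idx_nat[simp]: "i < n \<Longrightarrow> idx n (int i) = i"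
  unfolding idx_def by (simp add: zmod_int[symmetric])

lemma im_lt[simp]: "im i < n" and ip_lt[simp]: "ip i < n"
  unfolding im_def ip_def by simp_all

lemma im_ip[simp]: "i < n \<Longrightarrow> im (ip i) = i"
  unfolding im_def ip_def using idx_idx[of "int i + 1" "-1"] by simp

lemma ip_im[simp]: "i < n \<Longrightarrow> ip (im i) = i"
  unfolding im_def ip_def using idx_idx[of "int i - 1" "1"] by simp

lemma im_inj: "z < n \<Longrightarrow> x < n \<Longrightarrow> im z = im x \<Longrightarrow> z = x"
  by (metis ip_im)

lemma suc_mod: "(i + 1) mod n = ip i" "Suc i mod n = ip i"
proof -
  have "nat ((int i + 1) mod int n) = Suc i mod n"
    by (metis nat_int of_nat_Suc zmod_int add.commute)
  then show "(i + 1) mod n = ip i" "Suc i mod n = ip i" unfolding ip_def idx_def by simp_all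
qed


fun lhsw :: "bool \<times> nat \<Rightarrow> arr list" where
  "lhsw (True, i) = [D (im i), U (im i), U i]"
| "lhsw (False, i) = [D i, D (im i), U (im i)]"
fun rw1 :: "bool \<times> nat \<Rightarrow> arr list" where
  "rw1 (True, i) = [U i, D i, U i]"
| "rw1 (False, i) = [D i, U i, D i]"
fun rw2 :: "bool \<times> nat \<Rightarrow> arr list" where
  "rw2 (True, i) = [U i, U (ip i), D (ip i)]"
| "rw2 (False, i) = [U (ip i), D (ip i), D i]"
fun rw3 :: "bool \<times> nat \<Rightarrow> arr list" where
  "rw3 (True, i) = [U i]"
| "rw3 (False, i) = [D i]"

fun win :: "arr \<Rightarrow> arr \<Rightarrow> arr \<Rightarrow> (bool \<times> nat) option" where
  "win (D x) (U y) (U z) = (if z < n \<and> x = im z \<and> y = x then Some (True, z) else None)"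
| "win (D x) (D y) (U z) = (if x < n \<and> y = im x \<and> z = y then Some (False, x) else None)"
| "win _ _ _ = None"

lemma win_iff: "win a b c = Some r \<longleftrightarrow> snd r < n \<and> lhsw r = [a, b, c]"
  by (cases r; cases "fst r"; cases a; cases b; cases c; auto)

fun red :: "arr list \<Rightarrow> (arr list \<times> (bool \<times> nat) \<times> arr list) option" where
  "red (a # b # c # rest) = (case win a b c of Some r \<Rightarrow> Some ([], r, rest)
      | None \<Rightarrow> map_option (\<lambda>(x, r, y). (a # x, r, y)) (red (b # c # rest)))"
| "red _ = None"

lemma red_Some: "red w = Some (x, r, y) \<Longrightarrow> w = x @ lhsw r @ y \<and> snd r < n"
proof (induction w arbitrary: x rule: red.induct)
  case (1 a b c rest)
  then show ?case using win_iff by (auto split: option.splits)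
qed auto

lemma len_lhsw[simp]: "length (lhsw r) = 3"
  by (cases r; cases "fst r"; auto)

lemma red_None: "red w = None \<Longrightarrow> w = x @ lhsw r @ y \<Longrightarrow> snd r < n \<Longrightarrow> False"
proof (induction w arbitrary: x rule: red.induct)
  case (1 a b c rest)
  show ?case
  proof (cases x)
    case Nil
    then have "lhsw r = [a, b, c]" using 1(3) by (cases r; cases "fst r"; auto)
    then have "win a b c = Some r" using 1(4) win_iff by simp
    then show ?thesis using 1(2) by simp
  next
    case (Cons a' x')
    have w0: "win a b c = None" using 1(2) by (auto split: option.splits)
    have r0: "red (b # c # rest) = None" using 1(2) w0 by simp
    show ?thesis using 1(1)[OF w0 r0, of x'] Cons 1(3) 1(4) by simp
  qed
next
  case ("2_1")
  then show ?case by (metis Nil_is_append_conv len_lhsw list.size(3) zero_neq_numeral)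
next
  case ("2_2" v)
  then have "length [v] = length (x @ lhsw r @ y)" by simp
  then show ?case by simp
next
  case ("2_3" u v)
  then have "length [u, v] = length (x @ lhsw r @ y)" by simp
  then show ?case by simp
qed

lemma red_leftmost: "red w = Some (x, r, y) \<Longrightarrow> w = x' @ lhsw r' @ y' \<Longrightarrow> snd r' < n
   \<Longrightarrow> length x \<le> length x'"
proof (induction w arbitrary: x x' rule: red.induct)
  case (1 a b c rest)
  show ?case
  proof (cases "win a b c")
    case None
    then obtain x0 where x0: "red (b # c # rest) = Some (x0, r, y)" "x = a # x0"
      using 1(2) by auto
    show ?thesis
    proof (cases x')
      case Nil
      then have "lhsw r' = [a, b, c]" using 1(3) len_lhsw[of r']
        by (cases "lhsw r'") (auto simp: Cons_eq_append_conv)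
      then show ?thesis using None win_iff 1(4) by (metis option.distinct(1) not_None_eq)
    next
      case (Cons a1 x1)
      then show ?thesis using 1 None x0 by auto
    qed
  next
    case (Some r0)
    have "x = []" using 1(2) Some by simp
    then show ?thesis by simp
  qed
next
  case "2_1" then show ?case by simp
next
  case ("2_2" v)
  then have "length [v] = length (x' @ lhsw r' @ y')" by simp
  then show ?case by simp
next
  case ("2_3" v vb)
  then have "length [v, vb] = length (x' @ lhsw r' @ y')" by simp
  then show ?case by simp
qed

fun isD :: "arr \<Rightarrow> bool" where "isD (D _) = True" | "isD (U _) = False"
definition cU :: "arr list \<Rightarrow> nat" where "cU xs = length (filter (\<lambda>a. \<not> isD a) xs)"
definition cD :: "arr list \<Rightarrow> nat" where "cD xs = length (filter isD xs)"
fun invc :: "arr list \<Rightarrow> nat" where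
  "invc [] = 0"
| "invc (a # xs) = (if isD a then cU xs else 0) + invc xs"

lemma invc_append: "invc (xs @ ys) = invc xs + invc ys + cD xs * cU ys"
  by (induction xs) (auto simp: cU_def cD_def algebra_simps)

lemma reduct_less:
  "(x @ rw1 r @ y, x @ lhsw r @ y) \<in> measures [length, invc]"
  "(x @ rw2 r @ y, x @ lhsw r @ y) \<in> measures [length, invc]"
  "(x @ rw3 r @ y, x @ lhsw r @ y) \<in> measures [length, invc]"
  by (cases r; cases "fst r"; simp add: invc_append cU_def cD_def)+

lemma red_less:
  "red w = Some (x, r, y) \<Longrightarrow> ((v, x @ rw1 r @ y), (v, w)) \<in> inv_image (measures [length, invc]) snd"
  "red w = Some (x, r, y) \<Longrightarrow> ((v, x @ rw2 r @ y), (v, w)) \<in> inv_image (measures [length, invc]) snd"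
  "red w = Some (x, r, y) \<Longrightarrow> ((v, x @ rw3 r @ y), (v, w)) \<in> inv_image (measures [length, invc]) snd"
  using red_Some[of w x r y] reduct_less[of x r y] by auto

function nf :: "path \<Rightarrow> path \<Rightarrow> 'k" where
  "nf (v, w) = (case red w of None \<Rightarrow> pvec (v, w)
     | Some (x, r, y) \<Rightarrow> (\<lambda>z. \<alpha> (snd r) * nf (v, x @ rw1 r @ y) z
          + \<beta> (snd r) * nf (v, x @ rw2 r @ y) z + \<gamma> (snd r) * nf (v, x @ rw3 r @ y) z))"
  by pat_completeness auto
termination
  apply (relation "inv_image (measures [length, invc]) snd")
     apply simp
  by (fastforce intro: red_less)+

declare nf.simps[simp del]

definition St :: "nat \<Rightarrow> arr list \<Rightarrow> bool \<times> nat \<Rightarrow> arr list \<Rightarrow> path \<Rightarrow> 'k" where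
  "St v x r y = (\<lambda>z. \<alpha> (snd r) * nf (v, x @ rw1 r @ y) z
     + \<beta> (snd r) * nf (v, x @ rw2 r @ y) z + \<gamma> (snd r) * nf (v, x @ rw3 r @ y) z)"

lemma nf_red: "red w = Some (x, r, y) \<Longrightarrow> nf (v, w) = St v x r y"
  by (simp add: nf.simps St_def)

lemma nf_none: "red w = None \<Longrightarrow> nf (v, w) = pvec (v, w)"
  by (simp add: nf.simps)

lemma lhsw_inj: "snd r < n \<Longrightarrow> snd r' < n \<Longrightarrow> lhsw r = lhsw r' \<Longrightarrow> r = r'"
  by (cases r; cases r'; cases "fst r"; cases "fst r'"; auto)

lemma overlap1: "snd r < n \<Longrightarrow> snd r' < n \<Longrightarrow> lhsw r' @ y' = a # lhsw r @ y \<Longrightarrow>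
   \<exists>X. r' = (False, X) \<and> r = (True, X) \<and> y' = U X # y \<and> X < n"
  by (cases r; cases r'; cases "fst r"; cases "fst r'"; auto dest: im_inj)

lemma overlap2: "lhsw r' @ y' = a # b # lhsw r @ y \<Longrightarrow> False"
  by (cases r; cases r'; cases "fst r"; cases "fst r'"; auto)

lemma split3: "lhsw r' @ y' = a # b # c # s \<Longrightarrow> lhsw r' = [a, b, c] \<and> y' = s"
  by (cases r'; cases "fst r'"; auto)

lemma prefix_split: "x' @ p = x @ q \<Longrightarrow> length x' \<le> length x \<Longrightarrow> \<exists>us. x = x' @ us \<and> p = us @ q"
  by (metis append_eq_append_conv_if append_eq_conv_conj)

lemma K_aux: "\<forall>x r y. w = x @ lhsw r @ y \<longrightarrow> snd r < n \<longrightarrow> nf (v, w) = St v x r y"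
proof (induction w rule: wf_induct_rule[OF wf_measures[of "[length, invc]"]])
  case (1 w)
  have IH: "\<And>u x r y. (u, w) \<in> measures [length, invc] \<Longrightarrow> u = x @ lhsw r @ y \<Longrightarrow> snd r < n
     \<Longrightarrow> nf (v, u) = St v x r y" using 1 by blast
  show ?case
  proof (intro allI impI)
    fix x r y assume w: "w = x @ lhsw r @ y" and rn: "snd r < n"
    obtain x' r' y' where red: "red w = Some (x', r', y')"
      using red_None[OF _ w rn] by (cases "red w") auto
    have w': "w = x' @ lhsw r' @ y'" "snd r' < n" using red_Some[OF red] by auto
    have le: "length x' \<le> length x" using red_leftmost[OF red w rn] .
    have nfw: "nf (v, w) = St v x' r' y'" using nf_red[OF red] .
    obtain us where us: "x = x' @ us" "lhsw r' @ y' = us @ lhsw r @ y"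
      using prefix_split[of x' "lhsw r' @ y'" x "lhsw r @ y"] le w w'(1) by auto
    consider "us = []" | a where "us = [a]" | a b where "us = [a, b]"
      | a b c s where "us = a # b # c # s"
      by (metis list.exhaust)
    then show "nf (v, w) = St v x r y"
    proof cases
      case 1
      then have "lhsw r' = lhsw r" "y' = y" using us(2) by (simp_all add: append_eq_append_conv)
      then have "r' = r" using lhsw_inj w'(2) rn by simp
      then show ?thesis using nfw us(1) 1 \<open>y' = y\<close> by simp
    next
      case 2
      have o1: "lhsw r' @ y' = a # lhsw r @ y" using us(2) 2 by simp
      then obtain X where X: "r' = (False, X)" "r = (True, X)" "y' = U X # y" "X < n"
        using overlap1[OF rn w'(2) o1] by blast
      have xx: "x = x' @ [D X]" using us(1) 2 o1 X by simp
      have wX: "w = x' @ D X # D (im X) # U (im X) # U X # y" using w' X by simp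
      have mA: "(x' @ rw2 (False, X) @ (U X # y), x' @ lhsw (False, X) @ (U X # y))
          \<in> measures [length, invc]" by (rule reduct_less)
      have A: "nf (v, x' @ U (ip X) # D (ip X) # D X # U X # y) = St v (x' @ [U (ip X)]) (False, ip X) y"
        by (rule IH) (use mA wX X in simp_all)
      have mB: "((x' @ [D X]) @ rw2 (True, X) @ y, (x' @ [D X]) @ lhsw (True, X) @ y)
          \<in> measures [length, invc]" by (rule reduct_less)
      have B: "nf (v, x' @ D X # U X # U (ip X) # D (ip X) # y) = St v x' (True, ip X) (D (ip X) # y)"
        by (rule IH) (use mB wX X in simp_all)
      show ?thesis unfolding nfw xx using A B X by (simp add: St_def fun_eq_iff algebra_simps)
    next
      case 3
      have "lhsw r' @ y' = a # b # lhsw r @ y" using us(2) 3 by simp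
      then show ?thesis using overlap2 by blast
    next
      case 4
      then have L: "lhsw r' = [a, b, c]" "y' = s @ lhsw r @ y" using split3 us(2) by auto
      have xs: "x = x' @ lhsw r' @ s" using us(1) 4 L by simp
      have e1: "nf (v, x' @ rw1 r' @ s @ lhsw r @ y) = St v (x' @ rw1 r' @ s) r y"
        by (rule IH) (use reduct_less(1)[of x' r' "s @ lhsw r @ y"] w' L rn in simp_all)
      have e2: "nf (v, x' @ rw2 r' @ s @ lhsw r @ y) = St v (x' @ rw2 r' @ s) r y"
        by (rule IH) (use reduct_less(2)[of x' r' "s @ lhsw r @ y"] w' L rn in simp_all)
      have e3: "nf (v, x' @ rw3 r' @ s @ lhsw r @ y) = St v (x' @ rw3 r' @ s) r y"
        by (rule IH) (use reduct_less(3)[of x' r' "s @ lhsw r @ y"] w' L rn in simp_all)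
      have f1: "nf (v, x' @ lhsw r' @ s @ rw1 r @ y) = St v x' r' (s @ rw1 r @ y)"
        by (rule IH) (use reduct_less(1)[of "x' @ lhsw r' @ s" r y] w xs w'(2) in simp_all)
      have f2: "nf (v, x' @ lhsw r' @ s @ rw2 r @ y) = St v x' r' (s @ rw2 r @ y)"
        by (rule IH) (use reduct_less(2)[of "x' @ lhsw r' @ s" r y] w xs w'(2) in simp_all)
      have f3: "nf (v, x' @ lhsw r' @ s @ rw3 r @ y) = St v x' r' (s @ rw3 r @ y)"
        by (rule IH) (use reduct_less(3)[of "x' @ lhsw r' @ s" r y] w xs w'(2) in simp_all)
      show ?thesis unfolding nfw xs L(2)
        apply (simp only: St_def append_assoc)
        apply (simp only: e1 e2 e3 f1 f2 f3)
        by (simp add: St_def fun_eq_iff algebra_simps)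
    qed
  qed
qed

lemma K: "snd r < n \<Longrightarrow> nf (v, x @ lhsw r @ y) = St v x r y"
  using K_aux by blast

lemma valid_lt: "valid_arrs n v w \<Longrightarrow> v < n"
  by (cases w) auto

lemma valid_append: "valid_arrs n v (xs @ ys) = (valid_arrs n v xs \<and> valid_arrs n (end_vertex n v xs) ys)"
  by (induction xs arbitrary: v) (auto dest: valid_lt)

fun rstart :: "bool \<times> nat \<Rightarrow> nat" where "rstart (True, i) = i" | "rstart (False, i) = ip i"
fun rend :: "bool \<times> nat \<Rightarrow> nat" where "rend (True, i) = ip i" | "rend (False, i) = i"

lemma valid_lhsw: "snd r < n \<Longrightarrow> valid_arrs n s (lhsw r @ y) \<longleftrightarrow> s = rstart r \<and> valid_arrs n (rend r) y"
  by (cases r; cases "fst r"; auto simp: suc_mod)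

lemma valid_rw: "snd r < n \<Longrightarrow> valid_arrs n (rend r) y \<Longrightarrow> valid_arrs n (rstart r) (rw1 r @ y)"
  "snd r < n \<Longrightarrow> valid_arrs n (rend r) y \<Longrightarrow> valid_arrs n (rstart r) (rw2 r @ y)"
  "snd r < n \<Longrightarrow> valid_arrs n (rend r) y \<Longrightarrow> valid_arrs n (rstart r) (rw3 r @ y)"
  by (cases r; cases "fst r"; auto simp: suc_mod)+

definition rel :: "bool \<times> nat \<Rightarrow> nat \<times> nat \<times> ('k \<times> arr list) list" where
  "rel r = (if fst r then relU n \<alpha> \<beta> \<gamma> (snd r) else relD n \<alpha> \<beta> \<gamma> (snd r))"

lemma rel_simps: "fst (rel r) = rstart r" "fst (snd (rel r)) = rend r"
  "snd (snd (rel r)) = [(1, lhsw r), (- \<alpha> (snd r), rw1 r), (- \<beta> (snd r), rw2 r), (- \<gamma> (snd r), rw3 r)]"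
  by (cases r; cases "fst r"; simp add: rel_def relU_def relD_def Let_def im_def ip_def)+

lemma sandwich_rel: "sandwich (v, x) (snd (snd (rel r))) y = (\<lambda>z. pvec (v, x @ lhsw r @ y) z
   - \<alpha> (snd r) * pvec (v, x @ rw1 r @ y) z - \<beta> (snd r) * pvec (v, x @ rw2 r @ y) z
   - \<gamma> (snd r) * pvec (v, x @ rw3 r @ y) z)"
  unfolding rel_simps sandwich_def pvec_def by (simp add: fun_eq_iff)

lemma gen_rel: "snd r < n \<Longrightarrow> valid_arrs n v x \<Longrightarrow> end_vertex n v x = rstart r \<Longrightarrow>
    valid_arrs n (rend r) y \<Longrightarrow> sandwich (v, x) (snd (snd (rel r))) y \<in> hideal n \<alpha> \<beta> \<gamma>"
  by (rule hideal.gen[of "snd r"]) (auto simp: rel_def valid_path_def path_tgt_def rel_simps[symmetric])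

lemma span: "valid_arrs n v w \<Longrightarrow> (\<lambda>z. pvec (v, w) z - nf (v, w) z) \<in> hideal n \<alpha> \<beta> \<gamma>"
proof (induction w rule: wf_induct_rule[OF wf_measures[of "[length, invc]"]])
  case (1 w)
  show ?case
  proof (cases "red w")
    case None
    then have "(\<lambda>z. pvec (v, w) z - nf (v, w) z) = (\<lambda>_. 0)" by (simp add: nf_none)
    then show ?thesis using hideal.zero by simp
  next
    case (Some t)
    then obtain x r y where red: "red w = Some (x, r, y)" by (cases t) auto
    have w: "w = x @ lhsw r @ y" and rn: "snd r < n" using red_Some[OF red] by auto
    have vx: "valid_arrs n v x" and vy: "valid_arrs n (end_vertex n v x) (lhsw r @ y)"
      using 1(2) w valid_append by auto
    have ex: "end_vertex n v x = rstart r" and vy': "valid_arrs n (rend r) y"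
      using vy valid_lhsw[OF rn] by auto
    have v1: "valid_arrs n v (x @ rw1 r @ y)" using valid_append vx ex valid_rw(1)[OF rn vy'] by simp
    have v2: "valid_arrs n v (x @ rw2 r @ y)" using valid_append vx ex valid_rw(2)[OF rn vy'] by simp
    have v3: "valid_arrs n v (x @ rw3 r @ y)" using valid_append vx ex valid_rw(3)[OF rn vy'] by simp
    have d1: "(\<lambda>z. pvec (v, x @ rw1 r @ y) z - nf (v, x @ rw1 r @ y) z) \<in> hideal n \<alpha> \<beta> \<gamma>"
      using 1(1)[OF _ v1] reduct_less(1)[of x r y] w by simp
    have d2: "(\<lambda>z. pvec (v, x @ rw2 r @ y) z - nf (v, x @ rw2 r @ y) z) \<in> hideal n \<alpha> \<beta> \<gamma>"
      using 1(1)[OF _ v2] reduct_less(2)[of x r y] w by simp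
    have d3: "(\<lambda>z. pvec (v, x @ rw3 r @ y) z - nf (v, x @ rw3 r @ y) z) \<in> hideal n \<alpha> \<beta> \<gamma>"
      using 1(1)[OF _ v3] reduct_less(3)[of x r y] w by simp
    have sw: "sandwich (v, x) (snd (snd (rel r))) y \<in> hideal n \<alpha> \<beta> \<gamma>"
      using gen_rel[OF rn vx ex vy'] .
    have "(\<lambda>z. ((sandwich (v, x) (snd (snd (rel r))) y z
        + \<alpha> (snd r) * (pvec (v, x @ rw1 r @ y) z - nf (v, x @ rw1 r @ y) z))
        + \<beta> (snd r) * (pvec (v, x @ rw2 r @ y) z - nf (v, x @ rw2 r @ y) z))
        + \<gamma> (snd r) * (pvec (v, x @ rw3 r @ y) z - nf (v, x @ rw3 r @ y) z)) \<in> hideal n \<alpha> \<beta> \<gamma>"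
      by (intro hideal.add hideal.smult sw d1 d2 d3)
    moreover have "(\<lambda>z. ((sandwich (v, x) (snd (snd (rel r))) y z
        + \<alpha> (snd r) * (pvec (v, x @ rw1 r @ y) z - nf (v, x @ rw1 r @ y) z))
        + \<beta> (snd r) * (pvec (v, x @ rw2 r @ y) z - nf (v, x @ rw2 r @ y) z))
        + \<gamma> (snd r) * (pvec (v, x @ rw3 r @ y) z - nf (v, x @ rw3 r @ y) z))
       = (\<lambda>z. pvec (v, w) z - nf (v, w) z)"
      using nf_red[OF red, of v] w unfolding sandwich_rel St_def by (simp add: fun_eq_iff algebra_simps)
    ultimately show ?thesis by simp
  qed
qed

end


context qd begin

lemma idx_eq: "a mod int n = b mod int n \<Longrightarrow> idx n a = idx n b"
  unfolding idx_def by simp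

lemma int_ip: "int (ip v) = (int v + 1) mod int n"
  unfolding ip_def by (simp add: int_idx)

lemma modh: "(a + b mod m - c) mod m = (a + b - c) mod (m::int)"
  "(a + b mod m - c - d) mod m = (a + b - c - d) mod (m::int)"
proof -
  have "(a + b mod m - c) = (a - c) + b mod m" "a + b - c = (a - c) + b" by simp_all
  then show "(a + b mod m - c) mod m = (a + b - c) mod (m::int)" by (metis mod_add_right_eq)
  have "(a + b mod m - c - d) = (a - c - d) + b mod m" "a + b - c - d = (a - c - d) + b" by simp_all
  then show "(a + b mod m - c - d) mod m = (a + b - c - d) mod (m::int)" by (metis mod_add_right_eq)
qed

lemma bpath_U: "v < n \<Longrightarrow> bpath n v j (Suc k) l = (v, U v # snd (bpath n (ip v) j k l))"
  unfolding bpath_def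
  apply (simp add: map_upt_Suc del: upt_Suc)
  apply (intro conjI ballI idx_eq)
  apply (simp_all add: int_ip mod_simps add_ac)
  apply (subgoal_tac "idx n (int k + int v) = idx n (int k + (1 + int v) mod int n - 1)")
  apply simp
  apply (rule idx_eq)
  apply (simp_all add: modh)
  done

lemma h1: "x < n \<Longrightarrow> idx n (int (ip x) - 1) = x"
  using im_ip[of x] unfolding im_def by simp

lemma h2: "idx n (int (ip x) - 1 - t) = idx n (int x - t)"
  by (rule idx_eq) (simp add: int_ip modh(2)[of 0, simplified])

lemma bpath_D1: "x < n \<Longrightarrow> D x # snd (bpath n x j 1 l) = snd (bpath n (ip x) (Suc j) 0 l)"
  unfolding bpath_def by (simp add: h1 h2)

lemma bpath_D0: "x < n \<Longrightarrow> D x # snd (bpath n x 0 0 l) = snd (bpath n (ip x) 0 0 (Suc l))"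
  unfolding bpath_def
  apply (simp add: h1 map_upt_Suc del: upt_Suc)
  apply (intro ballI idx_eq)
  subgoal for t
    using modh(2)[of 0 "int x + 1" "int n" "int t" 2] by (simp add: int_ip algebra_simps)
  done

lemma bpath_k2: "x < n \<Longrightarrow> \<exists>rest. snd (bpath n x j (Suc (Suc k)) l) = U x # U (ip x) # rest"
  unfolding bpath_def by (simp add: map_upt_Suc ip_def del: upt_Suc)

lemma bpath_j: "x < n \<Longrightarrow> \<exists>rest. snd (bpath n x (Suc j) 0 l) = D (im x) # U (im x) # rest"
  unfolding bpath_def by (simp add: im_def)

lemma fst_bpath[simp]: "fst (bpath n v j k l) = v"
  unfolding bpath_def by simp

lemma red_Cons_None: "red (a # w) = None \<Longrightarrow> red w = None"
  apply (cases w)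
   apply simp
  subgoal for b w'
    by (cases w') (auto split: option.splits)
  done

lemma normal_bpath: "valid_arrs n v w \<Longrightarrow> red w = None \<Longrightarrow> \<exists>j k l. (v, w) = bpath n v j k l"
proof (induction w arbitrary: v)
  case Nil
  then show ?case by (intro exI[of _ 0]) (simp add: bpath_def)
next
  case (Cons a w)
  have rw: "red w = None" using red_Cons_None Cons(3) .
  have vn: "v < n" "arr_idx a < n" "arr_src n a = v" "valid_arrs n (arr_tgt n a) w"
    using Cons(2) by auto
  obtain j k l where IH: "(arr_tgt n a, w) = bpath n (arr_tgt n a) j k l"
    using Cons(1)[OF vn(4) rw] by blast
  have wl: "w = snd (bpath n (arr_tgt n a) j k l)" using IH by (metis snd_conv)
  show ?case
  proof (cases a)
    case (U y)
    then have "y = v" "arr_tgt n a = ip v" using vn by (auto simp: suc_mod)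
    then have "(v, a # w) = bpath n v j (Suc k) l" using wl bpath_U[OF vn(1), of j k l] U by auto
    then show ?thesis by blast
  next
    case (D x)
    then have x: "x < n" "ip x = v" "arr_tgt n a = x" using vn by (auto simp: suc_mod)
    have wl: "w = snd (bpath n x j k l)" using wl x by simp
    consider "k = 0" "j = 0" | j' where "k = 0" "j = Suc j'" | "k = 1" | k' where "k = Suc (Suc k')"
      by (metis One_nat_def not0_implies_Suc)
    then show ?thesis
    proof cases
      case 1
      then show ?thesis using bpath_D0[OF x(1), of l] wl x D by (metis fst_bpath prod.collapse)
    next
      case 2
      then obtain rest where "w = D (im x) # U (im x) # rest" using bpath_j[OF x(1)] wl by blast
      then have "red (a # w) \<noteq> None" using D x by simp
      then show ?thesis using Cons(3) by simp
    next
      case 3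
      then show ?thesis using bpath_D1[OF x(1), of j l] wl x D by (metis fst_bpath prod.collapse)
    next
      case 4
      then obtain rest where "w = U x # U (ip x) # rest" using bpath_k2[OF x(1)] wl by blast
      then have "red (a # w) \<noteq> None" using D x im_ip[OF x(1)] by auto
      then show ?thesis using Cons(3) by simp
    qed
  qed
qed

end


context qd begin

fun nb :: "arr list \<Rightarrow> bool" where
  "nb (D a # U b # U c # r) = False"
| "nb (D a # D b # U c # r) = False"
| "nb (a # r) = nb r"
| "nb [] = True"

lemma nb_Cons: "nb (a # r) \<Longrightarrow> nb r"
  by (cases "a # r" rule: nb.cases) auto

lemma nb_red: "nb w \<Longrightarrow> red w = None"
proof (induction w rule: red.induct)
  case (1 a b c rest)
  have "win a b c = None"
  proof (rule ccontr)
    assume "win a b c \<noteq> None"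
    then show False using 1(2) by (cases a; cases b; cases c; auto)
  qed
  moreover have "red (b # c # rest) = None" using 1 calculation nb_Cons by blast
  ultimately show ?case by simp
qed auto

lemma nb_Ds: "list_all isD ds \<Longrightarrow> nb ds"
  by (induction ds rule: nb.induct) auto

lemma nb_DU: "nb X \<Longrightarrow> X = [] \<or> isD (hd X) \<Longrightarrow> nb (D p # U p # X)"
  by (cases X; cases "hd X") auto

lemma nb_rep: "list_all isD ds \<Longrightarrow>
   nb (concat (replicate j [D p, U p]) @ ds) \<and> (concat (replicate j [D p, U p]) @ ds = [] \<or> isD (hd (concat (replicate j [D p, U p]) @ ds)))"
proof (induction j)
  case 0
  then show ?case using nb_Ds by (cases ds) auto
next
  case (Suc j)
  then show ?case using nb_DU by simp
qed

lemma nb_Us: "nb (map (\<lambda>m. U (f m)) xs @ r) = nb r"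
  by (induction xs) auto

lemma nb_bpath: "nb (snd (bpath n i j k l))"
  unfolding bpath_def using nb_rep[of "map (\<lambda>m. D (idx n (int i + int k - 1 - int m))) [0..<l]"]
  by (simp add: nb_Us list_all_iff)

lemma nf_bpath: "nf (bpath n i j k l) = pvec (bpath n i j k l)"
proof -
  have "red (snd (bpath n i j k l)) = None" by (rule nb_red[OF nb_bpath])
  then have "nf (fst (bpath n i j k l), snd (bpath n i j k l)) = pvec (fst (bpath n i j k l), snd (bpath n i j k l))"
    by (rule nf_none)
  then show ?thesis by (simp only: prod.collapse)
qed

lemma bl_stats:
  "length (filter (\<lambda>a. \<not> isD a) (snd (bpath n i j k l))) = k + j"
  "length (filter isD (snd (bpath n i j k l))) = j + l"
  "length (takeWhile (\<lambda>a. \<not> isD a) (snd (bpath n i j k l))) = k"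
proof -
  show "length (filter (\<lambda>a. \<not> isD a) (snd (bpath n i j k l))) = k + j"
    unfolding bpath_def by (induction j) (auto simp: filter_concat comp_def)
  show "length (filter isD (snd (bpath n i j k l))) = j + l"
    unfolding bpath_def by (induction j) (auto simp: filter_concat comp_def)
  have "takeWhile (\<lambda>a. \<not> isD a) (concat (replicate j [D (idx n (int i + int k - 1)), U (idx n (int i + int k - 1))])
      @ map (\<lambda>m. D (idx n (int i + int k - 1 - int m))) [0..<l]) = []"
    by (cases j; cases l) (auto simp del: upt_Suc simp: upt_conv_Cons)
  moreover have "\<And>rest. takeWhile (\<lambda>a. \<not> isD a) (map (\<lambda>m. U (idx n (int i + int m))) [0..<k] @ rest)
     = map (\<lambda>m. U (idx n (int i + int m))) [0..<k] @ takeWhile (\<lambda>a. \<not> isD a) rest"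
    by (rule takeWhile_append2) auto
  ultimately show "length (takeWhile (\<lambda>a. \<not> isD a) (snd (bpath n i j k l))) = k"
    unfolding bpath_def by simp
qed

lemma bpath_inj: "bpath n i j k l = bpath n i' j' k' l' \<Longrightarrow> i = i' \<and> j = j' \<and> k = k' \<and> l = l'"
  by (metis bl_stats fst_bpath add_left_cancel add_right_cancel)

end


context qd begin

lemma red_valid: "valid_arrs n v w \<Longrightarrow> red w = Some (x, r, y) \<Longrightarrow>
   valid_arrs n v (x @ rw1 r @ y) \<and> valid_arrs n v (x @ rw2 r @ y) \<and> valid_arrs n v (x @ rw3 r @ y)"
proof -
  assume vw: "valid_arrs n v w" and red: "red w = Some (x, r, y)"
  have w: "w = x @ lhsw r @ y" and rn: "snd r < n" using red_Some[OF red] by auto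
  have vx: "valid_arrs n v x" and vy: "valid_arrs n (end_vertex n v x) (lhsw r @ y)"
    using vw w valid_append by auto
  have ex: "end_vertex n v x = rstart r" and vy': "valid_arrs n (rend r) y"
    using vy valid_lhsw[OF rn] by auto
  show ?thesis using valid_append vx ex valid_rw[OF rn vy'] by simp
qed

lemma supp_nf: "valid_arrs n v w \<Longrightarrow> finite {z. nf (v, w) z \<noteq> 0} \<and>
   (\<forall>z. nf (v, w) z \<noteq> 0 \<longrightarrow> (\<exists>j k l. z = bpath n v j k l))"
proof (induction w rule: wf_induct_rule[OF wf_measures[of "[length, invc]"]])
  case (1 w)
  show ?case
  proof (cases "red w")
    case None
    then have e: "nf (v, w) = pvec (v, w)" by (rule nf_none)
    obtain j k l where "(v, w) = bpath n v j k l" using normal_bpath[OF 1(2) None] by blast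
    then show ?thesis unfolding e pvec_def by auto
  next
    case (Some t)
    then obtain x r y where red: "red w = Some (x, r, y)" by (cases t) auto
    have w: "w = x @ lhsw r @ y" using red_Some[OF red] by auto
    note vv = red_valid[OF 1(2) red]
    have I1: "finite {z. nf (v, x @ rw1 r @ y) z \<noteq> 0} \<and>
      (\<forall>z. nf (v, x @ rw1 r @ y) z \<noteq> 0 \<longrightarrow> (\<exists>j k l. z = bpath n v j k l))"
      using 1(1)[of "x @ rw1 r @ y"] vv reduct_less(1)[of x r y] w by simp
    have I2: "finite {z. nf (v, x @ rw2 r @ y) z \<noteq> 0} \<and>
      (\<forall>z. nf (v, x @ rw2 r @ y) z \<noteq> 0 \<longrightarrow> (\<exists>j k l. z = bpath n v j k l))"
      using 1(1)[of "x @ rw2 r @ y"] vv reduct_less(2)[of x r y] w by simp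
    have I3: "finite {z. nf (v, x @ rw3 r @ y) z \<noteq> 0} \<and>
      (\<forall>z. nf (v, x @ rw3 r @ y) z \<noteq> 0 \<longrightarrow> (\<exists>j k l. z = bpath n v j k l))"
      using 1(1)[of "x @ rw3 r @ y"] vv reduct_less(3)[of x r y] w by simp
    have sub: "{z. nf (v, w) z \<noteq> 0} \<subseteq> {z. nf (v, x @ rw1 r @ y) z \<noteq> 0}
       \<union> {z. nf (v, x @ rw2 r @ y) z \<noteq> 0} \<union> {z. nf (v, x @ rw3 r @ y) z \<noteq> 0}"
      unfolding nf_red[OF red] St_def by auto
    show ?thesis
    proof
      show "finite {z. nf (v, w) z \<noteq> 0}" using finite_subset[OF sub] I1 I2 I3 by blast
      show "\<forall>z. nf (v, w) z \<noteq> 0 \<longrightarrow> (\<exists>j k l. z = bpath n v j k l)"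
        using sub I1 I2 I3 by blast
    qed
  qed
qed

lemma sum_pvec: "finite S \<Longrightarrow> P \<in> S \<Longrightarrow> (\<Sum>z\<in>S. pvec P z * g z) = g P"
proof -
  assume "finite S" "P \<in> S"
  have "(\<Sum>z\<in>S. pvec P z * g z) = (\<Sum>z\<in>S. if z = P then g z else 0)"
    by (rule sum.cong) (auto simp: pvec_def)
  also have "\<dots> = g P" using \<open>finite S\<close> \<open>P \<in> S\<close> by (simp add: sum.delta)
  finally show ?thesis .
qed

lemma kill: "f \<in> hideal n \<alpha> \<beta> \<gamma> \<Longrightarrow> finite {z. f z \<noteq> 0} \<and>
   (\<forall>S y. finite S \<longrightarrow> {z. f z \<noteq> 0} \<subseteq> S \<longrightarrow> (\<Sum>z\<in>S. f z * nf z y) = 0)"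
proof (induction rule: hideal.induct)
  case zero
  then show ?case by simp
next
  case (add f g)
  have ff: "finite {z. f z \<noteq> 0}" and fs: "\<And>S y. finite S \<Longrightarrow> {z. f z \<noteq> 0} \<subseteq> S \<Longrightarrow> (\<Sum>z\<in>S. f z * nf z y) = 0"
    using add.IH(1) by blast+
  have gf: "finite {z. g z \<noteq> 0}" and gs: "\<And>S y. finite S \<Longrightarrow> {z. g z \<noteq> 0} \<subseteq> S \<Longrightarrow> (\<Sum>z\<in>S. g z * nf z y) = 0"
    using add.IH(2) by blast+
  have sub: "{z. f z + g z \<noteq> 0} \<subseteq> {z. f z \<noteq> 0} \<union> {z. g z \<noteq> 0}" by auto
  have fin: "finite {z. f z + g z \<noteq> 0}"
    by (rule finite_subset[OF sub]) (use ff gf in simp)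
  show ?case
  proof (intro conjI fin allI impI)
    fix S y assume S: "finite S" "{z. f z + g z \<noteq> 0} \<subseteq> S"
    define S' where "S' = S \<union> {z. f z \<noteq> 0} \<union> {z. g z \<noteq> 0}"
    have fS': "finite S'" using S ff gf unfolding S'_def by simp
    have "(\<Sum>z\<in>S. (f z + g z) * nf z y) = (\<Sum>z\<in>S'. (f z + g z) * nf z y)"
    proof (rule sum.mono_neutral_left[OF fS'])
      show "S \<subseteq> S'" unfolding S'_def by blast
      show "\<forall>i\<in>S' - S. (f i + g i) * nf i y = 0"
      proof
        fix i assume "i \<in> S' - S"
        then have "f i + g i = 0" using S(2) by blast
        then show "(f i + g i) * nf i y = 0" by simp
      qed
    qed
    also have "\<dots> = (\<Sum>z\<in>S'. f z * nf z y) + (\<Sum>z\<in>S'. g z * nf z y)"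
      by (simp add: sum.distrib distrib_right)
    also have "\<dots> = 0"
    proof -
      have "{z. f z \<noteq> 0} \<subseteq> S'" "{z. g z \<noteq> 0} \<subseteq> S'" unfolding S'_def by blast+
      then show ?thesis using fs[OF fS'] gs[OF fS'] by simp
    qed
    finally show "(\<Sum>z\<in>S. (f z + g z) * nf z y) = 0" .
  qed
next
  case (smult f c)
  have ff: "finite {z. f z \<noteq> 0}" and fs: "\<And>S y. finite S \<Longrightarrow> {z. f z \<noteq> 0} \<subseteq> S \<Longrightarrow> (\<Sum>z\<in>S. f z * nf z y) = 0"
    using smult.IH by blast+
  have sub: "{z. c * f z \<noteq> 0} \<subseteq> {z. f z \<noteq> 0}" by auto
  have fin: "finite {z. c * f z \<noteq> 0}" by (rule finite_subset[OF sub ff])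
  show ?case
  proof (intro conjI fin allI impI)
    fix S y assume S: "finite S" "{z. c * f z \<noteq> 0} \<subseteq> S"
    define S' where "S' = S \<union> {z. f z \<noteq> 0}"
    have fS': "finite S'" using S ff unfolding S'_def by simp
    have "(\<Sum>z\<in>S. c * f z * nf z y) = (\<Sum>z\<in>S'. c * f z * nf z y)"
    proof (rule sum.mono_neutral_left[OF fS'])
      show "S \<subseteq> S'" unfolding S'_def by blast
      show "\<forall>i\<in>S' - S. c * f i * nf i y = 0"
      proof
        fix i assume "i \<in> S' - S"
        then have "c * f i = 0" using S(2) by blast
        then show "c * f i * nf i y = 0" by simp
      qed
    qed
    also have "\<dots> = c * (\<Sum>z\<in>S'. f z * nf z y)"
      by (simp add: sum_distrib_left mult.assoc)
    also have "\<dots> = 0"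
    proof -
      have "{z. f z \<noteq> 0} \<subseteq> S'" unfolding S'_def by blast
      then show ?thesis using fs[OF fS'] by simp
    qed
    finally show "(\<Sum>z\<in>S. c * f z * nf z y) = 0" .
  qed
next
  case (gen i r0 p qs)
  obtain b where r0: "r0 = rel (b, i)"
  proof (cases "r0 = relU n \<alpha> \<beta> \<gamma> i")
    case True
    then show ?thesis using that[of True] unfolding rel_def by simp
  next
    case False
    then show ?thesis using that[of False] gen(2) unfolding rel_def by simp
  qed
  obtain v x where p: "p = (v, x)" by (cases p)
  define r where "r = (b, i)"
  have rn: "snd r < n" using gen(1) r_def by simp
  define P0 where "P0 = (v, x @ lhsw r @ qs)"
  define P1 where "P1 = (v, x @ rw1 r @ qs)"
  define P2 where "P2 = (v, x @ rw2 r @ qs)"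
  define P3 where "P3 = (v, x @ rw3 r @ qs)"
  define F where "F = sandwich p (snd (snd r0)) qs"
  have sw: "F = (\<lambda>z. pvec P0 z - \<alpha> i * pvec P1 z - \<beta> i * pvec P2 z - \<gamma> i * pvec P3 z)"
    unfolding F_def r0 p sandwich_rel P0_def P1_def P2_def P3_def r_def by simp
  have sub: "{z. F z \<noteq> 0} \<subseteq> {P0, P1, P2, P3}"
  proof
    fix z assume "z \<in> {z. F z \<noteq> 0}"
    then show "z \<in> {P0, P1, P2, P3}" unfolding sw pvec_def by (auto split: if_splits)
  qed
  have fin: "finite {z. F z \<noteq> 0}" using finite_subset[OF sub] by simp
  have main: "(\<Sum>z\<in>S. F z * nf z y) = 0" if S: "finite S" "{z. F z \<noteq> 0} \<subseteq> S" for S y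
  proof -
    define S' where "S' = S \<union> {P0, P1, P2, P3}"
    have fS': "finite S'" using S unfolding S'_def by simp
    have "(\<Sum>z\<in>S. F z * nf z y) = (\<Sum>z\<in>S'. F z * nf z y)"
    proof (rule sum.mono_neutral_left[OF fS'])
      show "S \<subseteq> S'" unfolding S'_def by blast
      show "\<forall>i\<in>S' - S. F i * nf i y = 0"
      proof
        fix z assume "z \<in> S' - S"
        then have "F z = 0" using S(2) by blast
        then show "F z * nf z y = 0" by simp
      qed
    qed
    also have "\<dots> = (\<Sum>z\<in>S'. pvec P0 z * nf z y) - \<alpha> i * (\<Sum>z\<in>S'. pvec P1 z * nf z y)
       - \<beta> i * (\<Sum>z\<in>S'. pvec P2 z * nf z y) - \<gamma> i * (\<Sum>z\<in>S'. pvec P3 z * nf z y)"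
      unfolding sw by (simp add: left_diff_distrib sum_subtractf sum_distrib_left mult.assoc)
    also have "\<dots> = nf P0 y - \<alpha> i * nf P1 y - \<beta> i * nf P2 y - \<gamma> i * nf P3 y"
    proof -
      have "P0 \<in> S'" "P1 \<in> S'" "P2 \<in> S'" "P3 \<in> S'" unfolding S'_def by blast+
      then show ?thesis using fS' by (simp add: sum_pvec)
    qed
    also have "\<dots> = 0"
      using K[OF rn, of v x qs] unfolding P0_def P1_def P2_def P3_def St_def r_def by simp
    finally show ?thesis .
  qed
  show ?case using fin main unfolding F_def by blast
qed

end



theorem proposition1p1:
  fixes n :: nat and \<alpha> \<beta> \<gamma> :: "nat \<Rightarrow> 'k::field_char_0"
  assumes alg_closed: "\<And>p :: 'k poly. degree p > 0 \<Longrightarrow> \<exists>x. poly p x = 0"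
    and n: "n \<ge> 1"
  shows "(\<forall>T c. finite T \<and> (\<forall>(i, j, k, l) \<in> T. i < n) \<and>
            (\<lambda>x. \<Sum>t\<in>T. c t * pvec (case t of (i, j, k, l) \<Rightarrow> bpath n i j k l) x)
              \<in> hideal n \<alpha> \<beta> \<gamma>
            \<longrightarrow> (\<forall>t\<in>T. c t = 0))
       \<and> (\<forall>p. valid_path n p \<longrightarrow>
            (\<exists>T c. finite T \<and> (\<forall>(i, j, k, l) \<in> T. i < n) \<and>
              (\<lambda>x. pvec p x - (\<Sum>t\<in>T. c t * pvec (case t of (i, j, k, l) \<Rightarrow> bpath n i j k l) x))
                \<in> hideal n \<alpha> \<beta> \<gamma>))"
proof -
  interpret qd n \<alpha> \<beta> \<gamma> using n by unfold_locales
  define bp :: "nat \<times> nat \<times> nat \<times> nat \<Rightarrow> path" where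
    "bp t = (case t of (i, j, k, l) \<Rightarrow> bpath n i j k l)" for t
  have bp_inj: "bp t = bp t' \<Longrightarrow> t = t'" for t t'
    using bpath_inj unfolding bp_def by (cases t; cases t') auto
  have nf_bp: "nf (bp t) = pvec (bp t)" for t
    unfolding bp_def by (cases t) (simp add: nf_bpath)
  have P1: "\<forall>T c. finite T \<and> (\<forall>(i, j, k, l) \<in> T. i < n) \<and>
            (\<lambda>x. \<Sum>t\<in>T. c t * pvec (case t of (i, j, k, l) \<Rightarrow> bpath n i j k l) x)
              \<in> hideal n \<alpha> \<beta> \<gamma>
            \<longrightarrow> (\<forall>t\<in>T. c t = 0)"
  proof (intro allI impI)
    fix T and c :: "nat \<times> nat \<times> nat \<times> nat \<Rightarrow> 'k"
    assume A: "finite T \<and> (\<forall>(i, j, k, l) \<in> T. i < n) \<and>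
            (\<lambda>x. \<Sum>t\<in>T. c t * pvec (case t of (i, j, k, l) \<Rightarrow> bpath n i j k l) x)
              \<in> hideal n \<alpha> \<beta> \<gamma>"
    define f where "f = (\<lambda>x. \<Sum>t\<in>T. c t * pvec (bp t) x)"
    have fT: "finite T" using A by blast
    have fI: "f \<in> hideal n \<alpha> \<beta> \<gamma>" using A unfolding f_def bp_def by blast
    have sub: "{z. f z \<noteq> 0} \<subseteq> bp ` T"
    proof
      fix z assume "z \<in> {z. f z \<noteq> 0}"
      then have "(\<Sum>t\<in>T. c t * pvec (bp t) z) \<noteq> 0" unfolding f_def by simp
      then obtain t where "t \<in> T" "c t * pvec (bp t) z \<noteq> 0" by (meson sum.neutral)
      then show "z \<in> bp ` T" unfolding pvec_def by (auto split: if_splits)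
    qed
    have fin: "finite (bp ` T)" using fT by simp
    have zero: "(\<Sum>z\<in>bp ` T. f z * nf z y) = 0" for y using kill[OF fI] sub fin by blast
    show "\<forall>t\<in>T. c t = 0"
    proof
      fix t0 assume t0: "t0 \<in> T"
      have "(\<Sum>z\<in>bp ` T. f z * nf z (bp t0)) = (\<Sum>z\<in>bp ` T. if z = bp t0 then f z else 0)"
      proof (rule sum.cong)
        fix z assume "z \<in> bp ` T"
        then obtain t where "z = bp t" by blast
        then show "f z * nf z (bp t0) = (if z = bp t0 then f z else 0)"
          by (simp add: nf_bp pvec_def)
      qed simp
      also have "\<dots> = f (bp t0)" using fin t0 by (simp add: sum.delta)
      finally have f0: "f (bp t0) = 0" using zero by simp
      have "f (bp t0) = (\<Sum>t\<in>T. if t = t0 then c t else 0)"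
        unfolding f_def
      proof (rule sum.cong)
        fix t assume "t \<in> T"
        show "c t * pvec (bp t) (bp t0) = (if t = t0 then c t else 0)"
          using bp_inj[of t0 t] by (auto simp: pvec_def)
      qed simp
      also have "\<dots> = c t0" using fT t0 by (simp add: sum.delta)
      finally show "c t0 = 0" using f0 by simp
    qed
  qed
  have P2: "\<forall>p. valid_path n p \<longrightarrow>
            (\<exists>T c. finite T \<and> (\<forall>(i, j, k, l) \<in> T. i < n) \<and>
              (\<lambda>x. pvec p x - (\<Sum>t\<in>T. c t * pvec (case t of (i, j, k, l) \<Rightarrow> bpath n i j k l) x))
                \<in> hideal n \<alpha> \<beta> \<gamma>)"
  proof (intro allI impI)
    fix p assume vp: "valid_path n p"
    obtain v w where p: "p = (v, w)" by (cases p)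
    have vw: "valid_arrs n v w" using vp p by (simp add: valid_path_def)
    have vn: "v < n" using valid_lt[OF vw] .
    define Z where "Z = {z. nf (v, w) z \<noteq> 0}"
    have finZ: "finite Z" and Zb: "\<And>z. z \<in> Z \<Longrightarrow> \<exists>j k l. z = bpath n v j k l"
      using supp_nf[OF vw] unfolding Z_def by auto
    define \<tau> where "\<tau> z = (SOME t. fst t = v \<and> bp t = z)" for z
    have \<tau>: "fst (\<tau> z) = v \<and> bp (\<tau> z) = z" if zZ: "z \<in> Z" for z
    proof -
      obtain j k l where "z = bpath n v j k l" using Zb[OF zZ] by blast
      then have "\<exists>t. fst t = v \<and> bp t = z" by (intro exI[of _ "(v, j, k, l)"]) (simp add: bp_def)
      then show ?thesis unfolding \<tau>_def by (rule someI_ex)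
    qed
    define T where "T = \<tau> ` Z"
    define c where "c t = nf (v, w) (bp t)" for t
    have inj: "inj_on \<tau> Z"
      by (rule inj_onI) (metis \<tau>)
    have sumeq: "(\<Sum>t\<in>T. c t * pvec (bp t) x) = nf (v, w) x" for x
    proof -
      have "(\<Sum>t\<in>T. c t * pvec (bp t) x) = (\<Sum>z\<in>Z. c (\<tau> z) * pvec (bp (\<tau> z)) x)"
        unfolding T_def by (rule sum.reindex[OF inj, unfolded comp_def])
      also have "\<dots> = (\<Sum>z\<in>Z. if z = x then nf (v, w) z else 0)"
      proof (rule sum.cong)
        fix z assume "z \<in> Z"
        then show "c (\<tau> z) * pvec (bp (\<tau> z)) x = (if z = x then nf (v, w) z else 0)"
          using \<tau> unfolding c_def pvec_def by auto
      qed simp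
      also have "\<dots> = nf (v, w) x" using finZ by (simp add: sum.delta Z_def)
      finally show ?thesis .
    qed
    have "finite T" using finZ unfolding T_def by simp
    moreover have "\<forall>(i, j, k, l) \<in> T. i < n"
    proof
      fix t assume "t \<in> T"
      then have "fst t = v" using \<tau> unfolding T_def by blast
      then show "case t of (i, j, k, l) \<Rightarrow> i < n" using vn by (cases t) auto
    qed
    moreover have "(\<lambda>x. pvec p x - (\<Sum>t\<in>T. c t * pvec (case t of (i, j, k, l) \<Rightarrow> bpath n i j k l) x))
                \<in> hideal n \<alpha> \<beta> \<gamma>"
    proof -
      have "(\<lambda>x. pvec p x - (\<Sum>t\<in>T. c t * pvec (case t of (i, j, k, l) \<Rightarrow> bpath n i j k l) x))
          = (\<lambda>x. pvec (v, w) x - nf (v, w) x)"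
        using sumeq unfolding bp_def p by simp
      then show ?thesis using span[OF vw] by simp
    qed
    ultimately show "\<exists>T c. finite T \<and> (\<forall>(i, j, k, l) \<in> T. i < n) \<and>
              (\<lambda>x. pvec p x - (\<Sum>t\<in>T. c t * pvec (case t of (i, j, k, l) \<Rightarrow> bpath n i j k l) x))
                \<in> hideal n \<alpha> \<beta> \<gamma>" by blast
  qed
  show ?thesis using P1 P2 by blast
qed


end
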